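(* Let $d\ge1$. For every compact set $\mathbb K\subset\mathbb R^{2d}$ there is a finite constant $C=C(\mathbb K,K,\theta,d)$ such that for all $\varepsilon\in(0,1]$ and all $(x,v)\in\mathbb K$, $$|U^\varepsilon(x,v)|\le C\varepsilon^{-d},\qquad|\nabla_vU^\varepsilon(x,v)|\le C\varepsilon^{-d}.$$
   Context: Let $\theta:\mathbb R^d\to[0,\infty)$ be $C^\infty$ with $\int\theta=1$, $\theta(0)=0$, $\theta(x)=\theta(-x)$, support in the closed unit ball, and $\theta^\varepsilon(x)=\varepsilon^{-d}\theta(x/\varepsilon)$. Let $K>0$ and $\chi^K:\mathbb R^d\to[0,1]$ be $C^\infty$, equal to $1$ on $\{|\xi|\le2K\}$ and $0$ on $\{|\xi|\ge4K\}$. Let $G((x,v),(y,w))=\int_0^\infty\mathsf P_t((x,v),(y,w))dt$ with $\mathsf P_t((x,v),(y,w))=\big(\tfrac{\sqrt3}{2\pi t^2}\big)^d\exp\{-3|\tfrac{v-w}{2t^{1/2}}+\tfrac{x-y-tv}{t^{3/2}}|^2-\tfrac{|v-w|^2}{4t}\}$ (the Green's function of $-(v\cdot\nabla_x+\Delta_v)$), and $U^\varepsilon(x,v)=\iint_{\mathbb R^{2d}}G((x,v),(y,w))\theta^\varepsilon(y)\chi^K(w)dydw$. *)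

theory Defs
  imports "HOL-Analysis.Analysis"
begin

definition partial_deriv :: "'n::finite \<Rightarrow> (real^'n \<Rightarrow> real) \<Rightarrow> real^'n \<Rightarrow> real" where
  "partial_deriv i f x = deriv (\<lambda>t. f (x + t *\<^sub>R axis i 1)) 0"

fun iter_partial :: "'n::finite list \<Rightarrow> (real^'n \<Rightarrow> real) \<Rightarrow> real^'n \<Rightarrow> real" where
  "iter_partial [] f = f"
| "iter_partial (i # is) f = partial_deriv i (iter_partial is f)"

definition smooth_fun :: "(real^'n::finite \<Rightarrow> real) \<Rightarrow> bool" where
  "smooth_fun f \<longleftrightarrow>
     (\<forall>is. continuous_on UNIV (iter_partial is f) \<and>
        (\<forall>i x. (\<lambda>t. iter_partial is f (x + t *\<^sub>R axis i 1)) differentiable (at 0)))"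

(* Transition density P_t((x,v),(y,w)) of the kinetic operator, d = CARD('n) *)
definition kin_P :: "real \<Rightarrow> real^'n::finite \<Rightarrow> real^'n \<Rightarrow> real^'n \<Rightarrow> real^'n \<Rightarrow> real" where
  "kin_P t x v y w =
     (sqrt 3 / (2 * pi * t\<^sup>2)) ^ CARD('n) *
     exp (- 3 * (norm ((1 / (2 * sqrt t)) *\<^sub>R (v - w) + (1 / t powr (3/2)) *\<^sub>R (x - y - t *\<^sub>R v)))\<^sup>2
          - (norm (v - w))\<^sup>2 / (4 * t))"

(* Green's function G((x,v),(y,w)) = int_0^\<infinity> P_t dt  (nonnegative integrand; the
   value is +\<infinity> only on the null set (x,v) = (y,w), where we get 0 via enn2real). *)
definition kin_G :: "real^'n::finite \<Rightarrow> real^'n \<Rightarrow> real^'n \<Rightarrow> real^'n \<Rightarrow> real" where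
  "kin_G x v y w = enn2real (\<integral>\<^sup>+ t. ennreal (kin_P t x v y w) * indicator {0<..} t \<partial>lborel)"

definition mollif :: "(real^'n::finite \<Rightarrow> real) \<Rightarrow> real \<Rightarrow> real^'n \<Rightarrow> real" where
  "mollif theta \<epsilon> y = \<epsilon> powr (- real CARD('n)) * theta ((1 / \<epsilon>) *\<^sub>R y)"

definition U_integrand :: "(real^'n::finite \<Rightarrow> real) \<Rightarrow> (real^'n \<Rightarrow> real) \<Rightarrow> real
     \<Rightarrow> real^'n \<Rightarrow> real^'n \<Rightarrow> (real^'n) \<times> (real^'n) \<Rightarrow> real" where
  "U_integrand theta chi \<epsilon> x v = (\<lambda>(y, w). kin_G x v y w * mollif theta \<epsilon> y * chi w)"

definition U_eps :: "(real^'n::finite \<Rightarrow> real) \<Rightarrow> (real^'n \<Rightarrow> real) \<Rightarrow> real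
     \<Rightarrow> real^'n \<Rightarrow> real^'n \<Rightarrow> real" where
  "U_eps theta chi \<epsilon> x v = (\<integral> yw. U_integrand theta chi \<epsilon> x v yw \<partial>lborel)"

end

theory Submission
  imports Defs "HOL-Probability.Probability"
begin

lemma gauss1_int: "integrable lborel (\<lambda>x::real. (1 + \<bar>x\<bar>) * exp (- x\<^sup>2 / 2))"
proof -
  have "integrable lborel (\<lambda>x. std_normal_density x * \<bar>x\<bar>^0 + std_normal_density x * \<bar>x\<bar>^1)"
    by (intro Bochner_Integration.integrable_add integrable_std_normal_moment_abs)
  then have "integrable lborel (\<lambda>x. sqrt (2*pi) * (std_normal_density x * \<bar>x\<bar>^0 + std_normal_density x * \<bar>x\<bar>^1))"
    by (rule Bochner_Integration.integrable_mult_right)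
  moreover have "(\<lambda>x. sqrt (2*pi) * (std_normal_density x * \<bar>x\<bar>^0 + std_normal_density x * \<bar>x\<bar>^1)) = (\<lambda>x::real. (1 + \<bar>x\<bar>) * exp (- x\<^sup>2 / 2))"
    by (auto simp: std_normal_density_def fun_eq_iff field_simps)
  ultimately show ?thesis by metis
qed

lemma gauss1_fin: "(\<integral>\<^sup>+x. ennreal ((1 + \<bar>x::real\<bar>) * exp (- x\<^sup>2 / 2)) \<partial>lborel) < \<infinity>"
  using gauss1_int[unfolded integrable_iff_bounded] by simp

lemma one_plus_sum_le_prod:
  fixes f :: "'a \<Rightarrow> real"
  assumes "finite A" "\<And>x. x \<in> A \<Longrightarrow> f x \<ge> 0"
  shows "1 + sum f A \<le> (\<Prod>x\<in>A. 1 + f x)"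
  using assms
proof (induction A rule: finite_induct)
  case empty then show ?case by simp
next
  case (insert a A)
  have fa: "f a \<ge> 0" using insert by auto
  have s: "sum f A \<ge> 0" using insert by (auto intro: sum_nonneg)
  have IH: "1 + sum f A \<le> (\<Prod>x\<in>A. 1 + f x)" using insert by auto
  have "1 + sum f (insert a A) = 1 + f a + sum f A" using insert by simp
  also have "\<dots> \<le> (1 + f a) * (1 + sum f A)" using fa s by (simp add: algebra_simps)
  also have "\<dots> \<le> (1 + f a) * (\<Prod>x\<in>A. 1 + f x)" using IH fa by (intro mult_left_mono) auto
  finally show ?case using insert by simp
qed

lemma gaussE_bound:
  fixes a :: "'a::euclidean_space"
  shows "(1 + norm a) * exp (- (norm a)\<^sup>2 / 2) \<le> (\<Prod>b\<in>Basis. (1 + \<bar>a \<bullet> b\<bar>) * exp (- (a \<bullet> b)\<^sup>2 / 2))"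
proof -
  have n2: "(norm a)\<^sup>2 = (\<Sum>b\<in>Basis. (a \<bullet> b)\<^sup>2)"
    using power2_norm_eq_inner[of a] euclidean_inner[of a a] by (simp add: power2_eq_square)  
  have e: "exp (- (norm a)\<^sup>2 / 2) = (\<Prod>b\<in>Basis. exp (- (a \<bullet> b)\<^sup>2 / 2))"
    unfolding n2 by (simp add: exp_sum[symmetric] sum_negf sum_divide_distrib)
  have "1 + norm a \<le> 1 + (\<Sum>b\<in>Basis. \<bar>a \<bullet> b\<bar>)" using norm_le_l1[of a] by simp
  also have "\<dots> \<le> (\<Prod>b\<in>Basis. 1 + \<bar>a \<bullet> b\<bar>)" by (rule one_plus_sum_le_prod) auto
  finally have "(1 + norm a) * exp (- (norm a)\<^sup>2 / 2) \<le> (\<Prod>b\<in>Basis. 1 + \<bar>a \<bullet> b\<bar>) * (\<Prod>b\<in>Basis. exp (- (a \<bullet> b)\<^sup>2 / 2))"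
    unfolding e by (intro mult_right_mono) (auto intro: prod_nonneg)
  then show ?thesis by (simp add: prod.distrib)
qed

definition gE :: "'a::euclidean_space \<Rightarrow> real" where
  "gE a = (1 + norm a) * exp (- (norm a)\<^sup>2 / 2)"

lemma gE_nonneg: "gE a \<ge> 0" by (simp add: gE_def)
lemma aux1: "(n::real) \<ge> 0 \<Longrightarrow> 1 + n \<le> 2*(1 + n\<^sup>2/2)"
proof (cases "n \<le> 1")
  case True 
  have "n \<le> 1 + n\<^sup>2" by (rule order_trans[OF True]) simp
  then show ?thesis by (simp add: algebra_simps)
next
  case False then have "n \<le> n\<^sup>2" by (simp add: power2_eq_square mult_le_cancel_left1) 
  then show ?thesis by (simp add: algebra_simps)
qed

lemma gE_le2: "gE a \<le> 2"
proof -
  have e: "exp ((norm a)\<^sup>2 / 2) \<ge> 1 + (norm a)\<^sup>2 / 2" by (rule exp_ge_add_one_self)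
  have f: "1 + norm a \<le> 2 * (1 + (norm a)\<^sup>2 / 2)" by (rule aux1) simp
  have "1 + norm a \<le> 2 * exp ((norm a)\<^sup>2 / 2)"
    by (rule order_trans[OF f]) (rule mult_left_mono[OF e], simp)
  then show ?thesis by (simp add: gE_def exp_minus field_simps)
qed

lemma gE_measurable[measurable]: "gE \<in> borel_measurable borel"
  unfolding gE_def by measurable

lemma gE_fin: "(\<integral>\<^sup>+a. ennreal (gE (a::'a::euclidean_space)) \<partial>lborel) < \<infinity>"
proof -
  have "(\<integral>\<^sup>+a. ennreal (gE (a::'a)) \<partial>lborel) \<le> (\<integral>\<^sup>+a. (\<Prod>b\<in>Basis. ennreal ((1 + \<bar>(a::'a) \<bullet> b\<bar>) * exp (- (a \<bullet> b)\<^sup>2 / 2))) \<partial>lborel)"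
  proof (rule nn_integral_mono)
    fix a :: 'a assume "a \<in> space lborel"
    have "ennreal (gE a) \<le> ennreal (\<Prod>b\<in>Basis. (1 + \<bar>a \<bullet> b\<bar>) * exp (- (a \<bullet> b)\<^sup>2 / 2))"
      unfolding gE_def by (intro ennreal_leI gaussE_bound)
    also have "\<dots> = (\<Prod>b\<in>Basis. ennreal ((1 + \<bar>a \<bullet> b\<bar>) * exp (- (a \<bullet> b)\<^sup>2 / 2)))"
      by (rule prod_ennreal[symmetric]) auto
    finally show "ennreal (gE a) \<le> (\<Prod>b\<in>Basis. ennreal ((1 + \<bar>a \<bullet> b\<bar>) * exp (- (a \<bullet> b)\<^sup>2 / 2)))" .
  qed
  also have "\<dots> = (\<Prod>b\<in>(Basis::'a set). (\<integral>\<^sup>+x. ennreal ((1 + \<bar>x\<bar>) * exp (- x\<^sup>2 / 2)) \<partial>lborel))"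
    by (rule nn_integral_lborel_prod) auto
  also have "\<dots> < \<infinity>" using gauss1_fin by (simp add: power_less_top_ennreal)
  finally show ?thesis .
qed

lemma nn_integral_affine_euclid:
  fixes f :: "'a::euclidean_space \<Rightarrow> ennreal"
  assumes f[measurable]: "f \<in> borel_measurable borel" and s: "s \<noteq> 0"
  shows "(\<integral>\<^sup>+y. f (c + s *\<^sub>R y) \<partial>lborel) = ennreal (1 / \<bar>s\<bar> ^ DIM('a)) * (\<integral>\<^sup>+y. f y \<partial>lborel)"
proof -
  have "(\<integral>\<^sup>+y. f y \<partial>lborel) = ennreal (\<bar>s\<bar> ^ DIM('a)) * (\<integral>\<^sup>+y. f (c + s *\<^sub>R y) \<partial>lborel)"
    by (subst lborel_affine[OF s, of c]) (simp add: nn_integral_density nn_integral_distr nn_integral_cmult)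
  then have "ennreal (1 / \<bar>s\<bar> ^ DIM('a)) * (\<integral>\<^sup>+y. f y \<partial>lborel) = 
     (ennreal (1 / \<bar>s\<bar> ^ DIM('a)) * ennreal (\<bar>s\<bar> ^ DIM('a))) * (\<integral>\<^sup>+y. f (c + s *\<^sub>R y) \<partial>lborel)"
    by (simp add: mult.assoc)
  also have "ennreal (1 / \<bar>s\<bar> ^ DIM('a)) * ennreal (\<bar>s\<bar> ^ DIM('a)) = 1"
    using s by (simp add: ennreal_mult'[symmetric])
  finally show ?thesis by simp
qed

definition Av :: "real \<Rightarrow> real^'n::finite \<Rightarrow> real^'n \<Rightarrow> real^'n \<Rightarrow> real^'n \<Rightarrow> real^'n" where
  "Av t x v y w = (1 / (2 * sqrt t)) *\<^sub>R (v - w) + (1 / t powr (3/2)) *\<^sub>R (x - y - t *\<^sub>R v)"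

definition Bv :: "real \<Rightarrow> real^'n::finite \<Rightarrow> real^'n \<Rightarrow> real^'n" where
  "Bv t v w = (1 / (2 * sqrt t)) *\<^sub>R (v - w)"

lemma Av_measurable[measurable]: "(\<lambda>p. Av t x v (fst p) (snd p)) \<in> borel_measurable borel"
  unfolding Av_def by (intro borel_measurable_continuous_onI continuous_intros)
lemma Bv_measurable[measurable]: "(\<lambda>p. Bv t v (snd p)) \<in> borel_measurable borel"
  unfolding Bv_def by (intro borel_measurable_continuous_onI continuous_intros)

lemma kin_P_eq:
  fixes x v y w :: "real^'n::finite"
  assumes t: "t > 0"
  shows "kin_P t x v y w = (sqrt 3 / (2 * pi)) ^ CARD('n) / t ^ (2 * CARD('n)) *
      exp (- 3 * (norm (Av t x v y w))\<^sup>2 - (norm (Bv t v w))\<^sup>2)"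
proof -
  have b: "(norm (Bv t v w))\<^sup>2 = (norm (v - w))\<^sup>2 / (4 * t)"
    using t by (simp add: Bv_def power_mult_distrib power_divide real_sqrt_pow2 power2_eq_square[of 2] )
  have c: "(sqrt 3 / (2 * pi * t\<^sup>2)) ^ CARD('n) = (sqrt 3 / (2 * pi)) ^ CARD('n) / t ^ (2 * CARD('n))"
    by (simp add: power_divide power_mult_distrib power_mult)
  show ?thesis unfolding kin_P_def Av_def[symmetric] b c ..
qed

lemma Av_affine_y: "t > 0 \<Longrightarrow> Av t x v y w = (Av t x v 0 w) + (- (1 / t powr (3/2))) *\<^sub>R y"
  by (simp add: Av_def algebra_simps)

lemma Bv_affine_w: "t > 0 \<Longrightarrow> Bv t v w = Bv t v 0 + (- (1 / (2 * sqrt t))) *\<^sub>R w"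
  by (simp add: Bv_def algebra_simps)

lemma aux2: "(p::real) \<ge> 0 \<Longrightarrow> q \<ge> 0 \<Longrightarrow> - 3 * p - q \<le> - p / 2 - q / 2" by linarith

lemma exp_gE_bound:
  fixes a b :: "'a::euclidean_space"
  shows "exp (- 3 * (norm a)\<^sup>2 - (norm b)\<^sup>2) * ((1 + norm a) * (1 + norm b)) \<le> gE a * gE b"
proof -
  have "exp (- 3 * (norm a)\<^sup>2 - (norm b)\<^sup>2) \<le> exp (- (norm a)\<^sup>2 / 2) * exp (- (norm b)\<^sup>2 / 2)"
    unfolding exp_add[symmetric] exp_le_cancel_iff using aux2[of "(norm a)\<^sup>2" "(norm b)\<^sup>2"] by simp
  then have "exp (- 3 * (norm a)\<^sup>2 - (norm b)\<^sup>2) * ((1 + norm a) * (1 + norm b)) \<le> 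
     exp (- (norm a)\<^sup>2 / 2) * exp (- (norm b)\<^sup>2 / 2) * ((1 + norm a) * (1 + norm b))"
    by (intro mult_right_mono) auto
  then show ?thesis by (simp add: gE_def algebra_simps)
qed

definition IE :: "'n::finite itself \<Rightarrow> ennreal" where
  "IE _ = (\<integral>\<^sup>+a. ennreal (gE (a::real^'n)) \<partial>lborel)"

lemma IE_fin: "IE TYPE('n::finite) < \<infinity>"
  unfolding IE_def by (rule gE_fin)

lemma int_gE_AB:
  fixes x v :: "real^'n::finite"
  assumes t: "t > 0"
  shows "(\<integral>\<^sup>+p. ennreal (gE (Av t x v (fst p) (snd p)) * gE (Bv t v (snd p))) \<partial>lborel)
     = ennreal (2 ^ CARD('n) * t ^ (2 * CARD('n))) * (IE TYPE('n) * IE TYPE('n))"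
proof -
  let ?s = "1 / t powr (3/2)"
  let ?r = "1 / (2 * sqrt t)"
  have s0: "?s \<noteq> 0" "?r \<noteq> 0" using t by auto
  have ab: "\<bar>- ?s\<bar> = ?s" "\<bar>- ?r\<bar> = ?r" using t by auto
  have dim: "DIM(real^'n) = CARD('n)" by simp
  have inner: "(\<integral>\<^sup>+y. ennreal (gE (Av t x v y w)) \<partial>lborel) = ennreal (1 / ?s ^ CARD('n)) * IE TYPE('n)" for w
  proof -
    have "(\<integral>\<^sup>+y. ennreal (gE (Av t x v y w)) \<partial>lborel) = (\<integral>\<^sup>+y. ennreal (gE (Av t x v 0 w + (- ?s) *\<^sub>R y)) \<partial>lborel)"
      by (intro nn_integral_cong arg_cong[where f=ennreal] arg_cong[where f=gE] Av_affine_y[OF t])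
    also have "\<dots> = ennreal (1 / \<bar>- ?s\<bar> ^ DIM(real^'n)) * IE TYPE('n)"
      unfolding IE_def by (rule nn_integral_affine_euclid[where f="\<lambda>a. ennreal (gE a)"]) (use s0 in auto)
    finally show ?thesis unfolding ab dim .
  qed
  have outer: "(\<integral>\<^sup>+w. ennreal (gE (Bv t v w)) \<partial>lborel) = ennreal (1 / ?r ^ CARD('n)) * IE TYPE('n)"
  proof -
    have "(\<integral>\<^sup>+w. ennreal (gE (Bv t v w)) \<partial>lborel) = (\<integral>\<^sup>+w. ennreal (gE (Bv t v 0 + (- ?r) *\<^sub>R w)) \<partial>lborel)"
      by (intro nn_integral_cong arg_cong[where f=ennreal] arg_cong[where f=gE] Bv_affine_w[OF t])
    also have "\<dots> = ennreal (1 / \<bar>- ?r\<bar> ^ DIM(real^'n)) * IE TYPE('n)"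
      unfolding IE_def by (rule nn_integral_affine_euclid[where f="\<lambda>a. ennreal (gE a)"]) (use s0 in auto)
    finally show ?thesis unfolding ab dim .
  qed
  have "(\<integral>\<^sup>+p. ennreal (gE (Av t x v (fst p) (snd p)) * gE (Bv t v (snd p))) \<partial>lborel)
      = (\<integral>\<^sup>+p. ennreal (gE (Av t x v (fst p) (snd p)) * gE (Bv t v (snd p))) \<partial>(lborel \<Otimes>\<^sub>M lborel))"
    by (simp only: lborel_prod)
  also have "\<dots> = (\<integral>\<^sup>+w. (\<integral>\<^sup>+y. ennreal (gE (Av t x v y w) * gE (Bv t v w)) \<partial>lborel) \<partial>lborel)"
    apply (subst lborel_pair.nn_integral_snd[symmetric])
    subgoal unfolding lborel_prod measurable_lborel1 by measurable
    by simp
  also have "\<dots> = (\<integral>\<^sup>+w. ennreal (gE (Bv t v w)) * (\<integral>\<^sup>+y. ennreal (gE (Av t x v y w)) \<partial>lborel) \<partial>lborel)"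
    apply (intro nn_integral_cong)
    apply (subst nn_integral_cmult[symmetric])
    subgoal unfolding Av_def by measurable
    by (simp add: ennreal_mult' gE_nonneg mult.commute)
  also have "\<dots> = (\<integral>\<^sup>+w. ennreal (gE (Bv t v w)) \<partial>lborel) * (ennreal (1 / ?s ^ CARD('n)) * IE TYPE('n))"
    unfolding inner by (rule nn_integral_multc) (unfold Bv_def, measurable)
  also have "\<dots> = ennreal (1 / ?r ^ CARD('n)) * ennreal (1 / ?s ^ CARD('n)) * (IE TYPE('n) * IE TYPE('n))"
    unfolding outer by (simp add: mult_ac)
  also have "ennreal (1 / ?r ^ CARD('n)) * ennreal (1 / ?s ^ CARD('n)) = ennreal (2 ^ CARD('n) * t ^ (2 * CARD('n)))"
  proof -
    have "1 / ?r ^ CARD('n) * (1 / ?s ^ CARD('n)) = (2 * sqrt t * t powr (3/2)) ^ CARD('n)"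
      by (simp add: power_mult_distrib power_divide)
    also have "2 * sqrt t * t powr (3/2) = 2 * t\<^sup>2"
    proof -
      have "sqrt t * t powr (3/2) = t powr (1/2) * t powr (3/2)" using t by (simp add: powr_half_sqrt)
      also have "\<dots> = t powr 2" by (simp add: powr_add[symmetric])
      also have "\<dots> = t\<^sup>2" using t by simp
      finally show ?thesis by simp
    qed
    finally have "1 / ?r ^ CARD('n) * (1 / ?s ^ CARD('n)) = 2 ^ CARD('n) * t ^ (2 * CARD('n))"
      by (simp add: power_mult_distrib power_mult)
    then show ?thesis using t by (simp add: ennreal_mult'[symmetric])
  qed
  finally show ?thesis .
qed

lemma DUI:
  fixes \<phi> :: "'a::euclidean_space \<Rightarrow> 'b \<Rightarrow> real" and \<phi>' :: "'a \<Rightarrow> 'b \<Rightarrow> 'a \<Rightarrow> real"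
  assumes \<delta>: "\<delta> > 0"
    and deriv: "\<And>u z. u \<in> ball v0 \<delta> \<Longrightarrow> z \<in> space M \<Longrightarrow> ((\<lambda>u. \<phi> u z) has_derivative \<phi>' u z) (at u)"
    and int: "\<And>u. u \<in> ball v0 \<delta> \<Longrightarrow> integrable M (\<phi> u)"
    and meas': "\<And>h. (\<lambda>z. \<phi>' v0 z h) \<in> borel_measurable M"
    and bound: "\<And>u z h. u \<in> ball v0 \<delta> \<Longrightarrow> z \<in> space M \<Longrightarrow> \<bar>\<phi>' u z h\<bar> \<le> H z * norm h"
    and H: "integrable M H"
  shows "((\<lambda>u. \<integral>z. \<phi> u z \<partial>M) has_derivative (\<lambda>h. \<integral>z. \<phi>' v0 z h \<partial>M)) (at v0)"
proof -
  have v0: "v0 \<in> ball v0 \<delta>" using \<delta> by simp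
  have lin: "z \<in> space M \<Longrightarrow> linear (\<phi>' v0 z)" for z
    using deriv[OF v0] has_derivative_linear by blast
  have int': "integrable M (\<lambda>z. \<phi>' v0 z h)" for h
  proof -
    have Hh: "integrable M (\<lambda>z. H z * norm h)" using H by simp
    show ?thesis
    proof (rule Bochner_Integration.integrable_bound[OF Hh meas'])
      show "AE z in M. norm (\<phi>' v0 z h) \<le> norm (H z * norm h)"
      proof (intro AE_I2)
        fix z assume z: "z \<in> space M"
        have "\<bar>\<phi>' v0 z h\<bar> \<le> H z * norm h" by (rule bound[OF v0 z])
        also have "\<dots> \<le> \<bar>H z\<bar> * norm h" by (intro mult_right_mono) auto
        finally show "norm (\<phi>' v0 z h) \<le> norm (H z * norm h)" by (simp add: abs_mult)
      qed
    qed
  qed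
  have bl: "bounded_linear (\<lambda>h. \<integral>z. \<phi>' v0 z h \<partial>M)"
  proof (rule bounded_linear_intro[where K="\<integral>z. H z \<partial>M"])
    fix a b :: 'a
    have "(\<integral>z. \<phi>' v0 z (a + b) \<partial>M) = (\<integral>z. \<phi>' v0 z a + \<phi>' v0 z b \<partial>M)"
      by (intro Bochner_Integration.integral_cong refl) (simp add: lin linear_add)
    also have "\<dots> = (\<integral>z. \<phi>' v0 z a \<partial>M) + (\<integral>z. \<phi>' v0 z b \<partial>M)"
      using int' by simp
    finally show "(\<integral>z. \<phi>' v0 z (a + b) \<partial>M) = (\<integral>z. \<phi>' v0 z a \<partial>M) + (\<integral>z. \<phi>' v0 z b \<partial>M)" .
  next
    fix r :: real and a :: 'a
    have "(\<integral>z. \<phi>' v0 z (r *\<^sub>R a) \<partial>M) = (\<integral>z. r * \<phi>' v0 z a \<partial>M)"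
      by (intro Bochner_Integration.integral_cong refl) (simp add: lin linear_scale)
    then show "(\<integral>z. \<phi>' v0 z (r *\<^sub>R a) \<partial>M) = r *\<^sub>R (\<integral>z. \<phi>' v0 z a \<partial>M)" by simp
  next
    fix a :: 'a
    have "norm (\<integral>z. \<phi>' v0 z a \<partial>M) \<le> (\<integral>z. norm (\<phi>' v0 z a) \<partial>M)"
      by (rule integral_norm_bound)
    also have "\<dots> \<le> (\<integral>z. H z * norm a \<partial>M)"
      using bound[OF v0] int' H by (intro Bochner_Integration.integral_mono) auto
    finally have "norm (\<integral>z. \<phi>' v0 z a \<partial>M) \<le> (\<integral>z. H z * norm a \<partial>M)" .
    then show "norm (\<integral>z. \<phi>' v0 z a \<partial>M) \<le> norm a * (\<integral>z. H z \<partial>M)" by (simp add: mult.commute)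
  qed
  have mvt: "\<bar>\<phi> u z - \<phi> v0 z\<bar> \<le> H z * norm (u - v0)" if u: "u \<in> ball v0 \<delta>" and z: "z \<in> space M" for u z
  proof -
    have "norm (\<phi> u z - \<phi> v0 z) \<le> H z * norm (u - v0)"
    proof (rule differentiable_bound[where S="ball v0 \<delta>" and f'="\<lambda>u. \<phi>' u z"])
      show "convex (ball v0 \<delta>)" by simp
      show "((\<lambda>u. \<phi> u z) has_derivative \<phi>' u z) (at u within ball v0 \<delta>)" if "u \<in> ball v0 \<delta>" for u
        using deriv[OF that z] by (rule has_derivative_at_withinI)
      show "onorm (\<phi>' u z) \<le> H z" if "u \<in> ball v0 \<delta>" for u
        by (rule onorm_le) (use bound[OF that z] in simp)
    qed (use u v0 in auto)
    then show ?thesis by simp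
  qed
  show ?thesis
    unfolding has_derivative_at
  proof (intro conjI bl)
    let ?F = "\<lambda>u. \<integral>z. \<phi> u z \<partial>M"
    let ?D = "\<lambda>h. \<integral>z. \<phi>' v0 z h \<partial>M"
    show "(\<lambda>h. norm (?F (v0 + h) - ?F v0 - ?D h) / norm h) \<midarrow>0\<rightarrow> 0"
      unfolding tendsto_at_iff_sequentially comp_def
    proof (intro allI impI)
      fix X :: "nat \<Rightarrow> 'a" assume X0: "\<forall>i. X i \<in> UNIV - {0}" and Xlim: "X \<longlonglongrightarrow> 0"
      from Xlim \<delta> obtain N where N: "\<And>i. i \<ge> N \<Longrightarrow> norm (X i) < \<delta>"
        unfolding LIMSEQ_iff by auto
      define Y where "Y i = X (i + N)" for i
      have Y0: "Y i \<noteq> 0" for i using X0 by (auto simp: Y_def)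
      have Yb: "v0 + Y i \<in> ball v0 \<delta>" for i using N[of "i+N"] by (auto simp: Y_def dist_norm)
      have Ylim: "Y \<longlonglongrightarrow> 0" unfolding Y_def by (rule LIMSEQ_ignore_initial_segment[OF Xlim])
      define R where "R i z = (\<phi> (v0 + Y i) z - \<phi> v0 z - \<phi>' v0 z (Y i)) / norm (Y i)" for i z
      have Rint: "(\<integral>z. R i z \<partial>M) = (?F (v0 + Y i) - ?F v0 - ?D (Y i)) / norm (Y i)" for i
      proof -
        have "(\<integral>z. R i z \<partial>M) = (\<integral>z. \<phi> (v0 + Y i) z - \<phi> v0 z - \<phi>' v0 z (Y i) \<partial>M) / norm (Y i)"
          unfolding R_def by (rule integral_divide_zero)
        also have "(\<integral>z. \<phi> (v0 + Y i) z - \<phi> v0 z - \<phi>' v0 z (Y i) \<partial>M) = ?F (v0 + Y i) - ?F v0 - ?D (Y i)"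
          using int[OF Yb] int[OF v0] int' by simp
        finally show ?thesis .
      qed
      have "(\<lambda>i. \<integral>z. R i z \<partial>M) \<longlonglongrightarrow> (\<integral>z. 0 \<partial>M)"
      proof (rule integral_dominated_convergence[where w="\<lambda>z. 2 * H z"])
        show "(\<lambda>z. 0::real) \<in> borel_measurable M" by simp
        show "R i \<in> borel_measurable M" for i
          unfolding R_def using int[OF Yb] int[OF v0] meas' by measurable
        show "integrable M (\<lambda>z. 2 * H z)" using H by simp
        show "AE z in M. (\<lambda>i. R i z) \<longlonglongrightarrow> 0"
        proof (rule AE_I2)
          fix z assume z: "z \<in> space M"
          have "(\<lambda>h. norm (\<phi> (v0 + h) z - \<phi> v0 z - \<phi>' v0 z h) / norm h) \<midarrow>0\<rightarrow> 0"
            using deriv[OF v0 z] unfolding has_derivative_at by simp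
          then have "(\<lambda>i. norm (\<phi> (v0 + Y i) z - \<phi> v0 z - \<phi>' v0 z (Y i)) / norm (Y i)) \<longlonglongrightarrow> 0"
            unfolding tendsto_at_iff_sequentially comp_def using Y0 Ylim by auto
          then have "(\<lambda>i. \<bar>R i z\<bar>) \<longlonglongrightarrow> 0" by (simp add: R_def)
          then show "(\<lambda>i. R i z) \<longlonglongrightarrow> 0" by (simp add: tendsto_rabs_zero_iff)
        qed
        show "AE z in M. norm (R i z) \<le> 2 * H z" for i
        proof (rule AE_I2)
          fix z assume z: "z \<in> space M"
          have "\<bar>\<phi> (v0 + Y i) z - \<phi> v0 z - \<phi>' v0 z (Y i)\<bar> \<le> \<bar>\<phi> (v0 + Y i) z - \<phi> v0 z\<bar> + \<bar>\<phi>' v0 z (Y i)\<bar>"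
            by linarith
          also have "\<dots> \<le> H z * norm (Y i) + H z * norm (Y i)"
            using mvt[OF Yb z] bound[OF v0 z] by (intro add_mono) auto
          finally have "\<bar>\<phi> (v0 + Y i) z - \<phi> v0 z - \<phi>' v0 z (Y i)\<bar> \<le> (2 * H z) * norm (Y i)" by simp
          then show "norm (R i z) \<le> 2 * H z"
            using Y0[of i] by (simp add: R_def divide_le_eq)
        qed
      qed
      then have "(\<lambda>i. norm (\<integral>z. R i z \<partial>M)) \<longlonglongrightarrow> 0" using tendsto_norm_zero by force
      then have "(\<lambda>i. norm (?F (v0 + Y i) - ?F v0 - ?D (Y i)) / norm (Y i)) \<longlonglongrightarrow> 0"
        unfolding Rint by simp
      then show "(\<lambda>i. norm (?F (v0 + X i) - ?F v0 - ?D (X i)) / norm (X i)) \<longlonglongrightarrow> 0"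
        unfolding Y_def by (rule LIMSEQ_offset)
    qed
  qed
qed

lemma powr_three_halves: "t > 0 \<Longrightarrow> t powr (3/2) = t * sqrt t"
proof -
  assume t: "t > 0"
  have "t * sqrt t = t powr 1 * t powr (1/2)" using t by (simp add: powr_half_sqrt)
  also have "\<dots> = t powr (1 + 1/2)" by (rule powr_add[symmetric])
  also have "(1::real) + 1/2 = 3/2" by simp
  finally show ?thesis by simp
qed

lemma Av_affine_v:
  assumes t: "t > 0"
  shows "Av t x v y w = Av t x 0 y w + (- (1 / (2 * sqrt t))) *\<^sub>R v"
proof -
  define a where "a = 1 / (2 * sqrt t)"
  define s where "s = 1 / t powr (3/2)"
  have st: "s * t = a + a"
    using t by (simp add: powr_three_halves a_def s_def field_simps)
  have sv: "s *\<^sub>R (t *\<^sub>R v) = a *\<^sub>R v + a *\<^sub>R v"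
  proof -
    have "s *\<^sub>R (t *\<^sub>R v) = (s * t) *\<^sub>R v" by simp
    also have "\<dots> = (a + a) *\<^sub>R v" by (simp only: st)
    also have "\<dots> = a *\<^sub>R v + a *\<^sub>R v" by (rule scaleR_left_distrib)
    finally show ?thesis .
  qed
  have "Av t x v y w = a *\<^sub>R (v - w) + (s *\<^sub>R x - s *\<^sub>R y - s *\<^sub>R (t *\<^sub>R v))"
    by (simp add: Av_def a_def s_def scaleR_diff_right)
  also have "\<dots> = a *\<^sub>R (v - w) + (s *\<^sub>R x - s *\<^sub>R y - (a *\<^sub>R v + a *\<^sub>R v))"
    unfolding sv ..
  also have "\<dots> = (a *\<^sub>R (0 - w) + (s *\<^sub>R x - s *\<^sub>R y)) + (- a) *\<^sub>R v"
    by (simp add: algebra_simps)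
  also have "\<dots> = Av t x 0 y w + (- (1 / (2 * sqrt t))) *\<^sub>R v"
    by (simp add: Av_def a_def s_def scaleR_diff_right)
  finally show ?thesis .
qed

lemma Bv_affine_v: "Bv t v w = Bv t 0 w + (1 / (2 * sqrt t)) *\<^sub>R v"
  by (simp add: Bv_def algebra_simps)

definition dP :: "real \<Rightarrow> real^'n::finite \<Rightarrow> real^'n \<Rightarrow> real^'n \<Rightarrow> real^'n \<Rightarrow> real^'n \<Rightarrow> real" where
  "dP t x v y w h = kin_P t x v y w * ((3 * (Av t x v y w \<bullet> h) - Bv t v w \<bullet> h) / sqrt t)"

lemma P_deriv:
  fixes x v y w :: "real^'n::finite"
  assumes t: "t > 0"
  shows "((\<lambda>v. kin_P t x v y w) has_derivative dP t x v y w) (at v)"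
proof -
  let ?a = "1 / (2 * sqrt t)"
  let ?K = "(sqrt 3 / (2 * pi)) ^ CARD('n) / t ^ (2 * CARD('n))"
  have eq: "(\<lambda>v. kin_P t x v y w) = (\<lambda>v. ?K * exp (- 3 * (Av t x v y w \<bullet> Av t x v y w) - Bv t v w \<bullet> Bv t v w))"
    by (rule ext) (simp add: kin_P_eq[OF t] power2_norm_eq_inner)
  have dA: "((\<lambda>v. Av t x v y w) has_derivative (\<lambda>h. (- ?a) *\<^sub>R h)) (at v)"
  proof -
    have "((\<lambda>v. Av t x 0 y w + (- ?a) *\<^sub>R v) has_derivative (\<lambda>h. (- ?a) *\<^sub>R h)) (at v)"
      by (auto intro!: derivative_eq_intros)
    then show ?thesis by (subst Av_affine_v[OF t]) 
  qed
  have dB: "((\<lambda>v. Bv t v w) has_derivative (\<lambda>h. ?a *\<^sub>R h)) (at v)"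
  proof -
    have "((\<lambda>v. Bv t 0 w + ?a *\<^sub>R v) has_derivative (\<lambda>h. ?a *\<^sub>R h)) (at v)"
      by (auto intro!: derivative_eq_intros)
    then show ?thesis by (subst Bv_affine_v) 
  qed
  have "((\<lambda>v. ?K * exp (- 3 * (Av t x v y w \<bullet> Av t x v y w) - Bv t v w \<bullet> Bv t v w)) has_derivative
     (\<lambda>h. ?K * exp (- 3 * (Av t x v y w \<bullet> Av t x v y w) - Bv t v w \<bullet> Bv t v w) *
        ((3 * (Av t x v y w \<bullet> h) - Bv t v w \<bullet> h) / sqrt t))) (at v)"
    apply (rule derivative_eq_intros dA dB refl)+
    using t by (simp add: fun_eq_iff inner_commute field_simps)
  then show ?thesis unfolding eq dP_def by (simp add: kin_P_eq[OF t] power2_norm_eq_inner)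
qed

lemma dP_bound:
  fixes x v y w :: "real^'n::finite"
  assumes t: "t > 0"
  shows "\<bar>dP t x v y w h\<bar> \<le> 3 * (kin_P t x v y w * ((1 + norm (Av t x v y w)) * (1 + norm (Bv t v w)))) / sqrt t * norm h"
proof -
  have P0: "kin_P t x v y w \<ge> 0" unfolding kin_P_def by simp
  have "\<bar>3 * (Av t x v y w \<bullet> h) - Bv t v w \<bullet> h\<bar> \<le> 3 * \<bar>Av t x v y w \<bullet> h\<bar> + \<bar>Bv t v w \<bullet> h\<bar>" by linarith
  also have "\<dots> \<le> 3 * (norm (Av t x v y w) * norm h) + norm (Bv t v w) * norm h"
    by (intro add_mono mult_left_mono Cauchy_Schwarz_ineq2) auto
  also have "\<dots> \<le> 3 * ((1 + norm (Av t x v y w)) * (1 + norm (Bv t v w))) * norm h"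
    by (simp add: algebra_simps mult_right_mono)
  finally have "\<bar>3 * (Av t x v y w \<bullet> h) - Bv t v w \<bullet> h\<bar> \<le> 3 * ((1 + norm (Av t x v y w)) * (1 + norm (Bv t v w))) * norm h" .
  then have "kin_P t x v y w * \<bar>3 * (Av t x v y w \<bullet> h) - Bv t v w \<bullet> h\<bar> \<le> kin_P t x v y w * (3 * ((1 + norm (Av t x v y w)) * (1 + norm (Bv t v w))) * norm h)"
    by (rule mult_left_mono) (rule P0)
  then have "kin_P t x v y w * \<bar>3 * (Av t x v y w \<bullet> h) - Bv t v w \<bullet> h\<bar> / sqrt t \<le> kin_P t x v y w * (3 * ((1 + norm (Av t x v y w)) * (1 + norm (Bv t v w))) * norm h) / sqrt t"
    by (rule divide_right_mono) (use t in simp)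
  moreover have "\<bar>dP t x v y w h\<bar> = kin_P t x v y w * \<bar>3 * (Av t x v y w \<bullet> h) - Bv t v w \<bullet> h\<bar> / sqrt t"
    unfolding dP_def using P0 t by (simp add: abs_mult)
  ultimately show ?thesis by (simp add: mult_ac)
qed

definition KKc :: "'n::finite itself \<Rightarrow> real" where
  "KKc _ = (sqrt 3 / (2 * pi)) ^ CARD('n)"

definition CP :: "'n::finite itself \<Rightarrow> real" where
  "CP _ = KKc TYPE('n) * 2 ^ CARD('n) * (enn2real (IE TYPE('n)))\<^sup>2"

definition Wt :: "real \<Rightarrow> real^'n::finite \<Rightarrow> real^'n \<Rightarrow> real^'n \<Rightarrow> real^'n \<Rightarrow> real" where
  "Wt t x v y w = kin_P t x v y w * ((1 + norm (Av t x v y w)) * (1 + norm (Bv t v w)))"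

lemma KKc_pos: "KKc TYPE('n::finite) > 0" unfolding KKc_def by simp

lemma CP_nonneg: "CP TYPE('n::finite) \<ge> 0" unfolding CP_def using KKc_pos[where 'n='n] by simp

lemma kin_P_nonneg: "kin_P t x v y w \<ge> 0" unfolding kin_P_def by simp

lemma Wt_ge_P: "kin_P t x v y w \<le> Wt t x v y w"
proof -
  have "1 * 1 \<le> (1 + norm (Av t x v y w)) * (1 + norm (Bv t v w))"
    by (rule mult_mono) auto
  then have "kin_P t x v y w * 1 \<le> kin_P t x v y w * ((1 + norm (Av t x v y w)) * (1 + norm (Bv t v w)))"
    by (intro mult_left_mono kin_P_nonneg) simp
  then show ?thesis unfolding Wt_def by simp
qed

lemma Wt_nonneg: "Wt t x v y w \<ge> 0" using Wt_ge_P kin_P_nonneg order_trans by blast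

lemma Wt_le_gE:
  fixes x v y w :: "real^'n::finite"
  assumes t: "t > 0"
  shows "Wt t x v y w \<le> KKc TYPE('n) / t ^ (2 * CARD('n)) * (gE (Av t x v y w) * gE (Bv t v w))"
proof -
  have "Wt t x v y w = KKc TYPE('n) / t ^ (2 * CARD('n)) * (exp (- 3 * (norm (Av t x v y w))\<^sup>2 - (norm (Bv t v w))\<^sup>2) * ((1 + norm (Av t x v y w)) * (1 + norm (Bv t v w))))"
    unfolding Wt_def kin_P_eq[OF t] KKc_def by simp
  also have "\<dots> \<le> KKc TYPE('n) / t ^ (2 * CARD('n)) * (gE (Av t x v y w) * gE (Bv t v w))"
    using t KKc_pos[where 'n='n] by (intro mult_left_mono exp_gE_bound) auto
  finally show ?thesis .
qed

lemma Wt_pt_bound: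
  fixes x v y w :: "real^'n::finite"
  assumes t: "t > 0"
  shows "Wt t x v y w \<le> 4 * KKc TYPE('n) / t ^ (2 * CARD('n))"
proof -
  have "gE (Av t x v y w) * gE (Bv t v w) \<le> 2 * 2"
    by (intro mult_mono gE_le2 gE_nonneg) auto
  then have "KKc TYPE('n) / t ^ (2 * CARD('n)) * (gE (Av t x v y w) * gE (Bv t v w)) \<le> KKc TYPE('n) / t ^ (2 * CARD('n)) * 4"
    using t KKc_pos[where 'n='n] by (intro mult_left_mono) auto
  with Wt_le_gE[OF t, of x v y w] have "Wt t x v y w \<le> KKc TYPE('n) / t ^ (2 * CARD('n)) * 4"
    by (rule order_trans)
  then show ?thesis by (simp add: mult.commute)
qed

lemma Wt_int_bound:
  fixes x v :: "real^'n::finite"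
  assumes t: "t > 0"
  shows "(\<integral>\<^sup>+p. ennreal (Wt t x v (fst p) (snd p)) \<partial>lborel) \<le> ennreal (CP TYPE('n))"
proof -
  let ?c = "KKc TYPE('n) / t ^ (2 * CARD('n))"
  have c0: "?c \<ge> 0" using KKc_pos[where 'n='n] t by simp
  have "(\<integral>\<^sup>+p. ennreal (Wt t x v (fst p) (snd p)) \<partial>lborel) \<le> (\<integral>\<^sup>+p. ennreal ?c * ennreal (gE (Av t x v (fst p) (snd p)) * gE (Bv t v (snd p))) \<partial>lborel)"
    by (intro nn_integral_mono) (use Wt_le_gE[OF t] c0 in \<open>auto simp: ennreal_mult'[symmetric] intro!: ennreal_leI\<close>)
  also have "\<dots> = ennreal ?c * (\<integral>\<^sup>+p. ennreal (gE (Av t x v (fst p) (snd p)) * gE (Bv t v (snd p))) \<partial>lborel)"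
    by (rule nn_integral_cmult) measurable
  also have "\<dots> = ennreal ?c * (ennreal (2 ^ CARD('n) * t ^ (2 * CARD('n))) * (IE TYPE('n) * IE TYPE('n)))"
    unfolding int_gE_AB[OF t] ..
  also have "IE TYPE('n) = ennreal (enn2real (IE TYPE('n)))"
    using IE_fin[where 'n='n] by simp
  also have "ennreal ?c * (ennreal (2 ^ CARD('n) * t ^ (2 * CARD('n))) * (ennreal (enn2real (IE TYPE('n))) * ennreal (enn2real (IE TYPE('n)))))
     = ennreal (CP TYPE('n))"
    using t c0 unfolding CP_def by (simp add: ennreal_mult'[symmetric] power2_eq_square field_simps)
  finally show ?thesis .
qed

lemma kin_P_meas_joint[measurable]:
  "(\<lambda>q. kin_P (fst q) x v (fst (snd q)) (snd (snd q))) \<in> borel_measurable (borel \<Otimes>\<^sub>M (borel \<Otimes>\<^sub>M borel))"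
  unfolding kin_P_def by measurable

lemma dP_meas_joint[measurable]:
  "(\<lambda>q. dP (fst q) x v (fst (snd q)) (snd (snd q)) h) \<in> borel_measurable (borel \<Otimes>\<^sub>M (borel \<Otimes>\<^sub>M borel))"
  unfolding dP_def Av_def Bv_def by measurable

lemma kin_P_meas[measurable]:
  "(\<lambda>p. kin_P t x v (fst p) (snd p)) \<in> borel_measurable (borel \<Otimes>\<^sub>M borel)"
  unfolding kin_P_def by measurable

lemma dP_meas[measurable]:
  "(\<lambda>p. dP t x v (fst p) (snd p) h) \<in> borel_measurable (borel \<Otimes>\<^sub>M borel)"
  unfolding dP_def Av_def Bv_def by measurable

lemma Wt_meas[measurable]:
  "(\<lambda>p. Wt t x v (fst p) (snd p)) \<in> borel_measurable (borel \<Otimes>\<^sub>M borel)"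
  unfolding Wt_def Av_def Bv_def by measurable

lemma meas_lborel_pair:
  fixes f :: "'a::euclidean_space \<times> 'b::euclidean_space \<Rightarrow> real"
  shows "f \<in> borel_measurable (borel \<Otimes>\<^sub>M borel) \<Longrightarrow> f \<in> borel_measurable lborel"
  by (simp add: borel_prod)

locale gset =
  fixes g :: "(real^'n::finite) \<times> (real^'n) \<Rightarrow> real" and S :: "((real^'n) \<times> (real^'n)) set" and Mg :: real
  assumes g_meas[measurable]: "g \<in> borel_measurable borel"
    and g_bound: "\<And>p. \<bar>g p\<bar> \<le> Mg"
    and g_supp: "\<And>p. p \<notin> S \<Longrightarrow> g p = 0"
    and S_sets[measurable]: "S \<in> sets borel"
    and S_fin: "emeasure lborel S < \<infinity>"
begin

lemma Mg_nonneg: "Mg \<ge> 0" using g_bound[of undefined] by linarith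

definition mS where "mS = measure lborel S"

lemma mS_nonneg: "mS \<ge> 0" unfolding mS_def by simp

lemma emeasure_S: "emeasure lborel S = ennreal mS"
  unfolding mS_def using S_fin by (simp add: emeasure_eq_ennreal_measure)

lemma g_ind: "\<bar>g p\<bar> \<le> Mg * indicator S p"
  using g_bound[of p] g_supp[of p] by (auto split: split_indicator)

lemma g_meas_l[measurable]: "g \<in> borel_measurable lborel" by simp

lemma g_meas_pair[measurable]: "g \<in> borel_measurable (borel \<Otimes>\<^sub>M borel)"
  using g_meas by (simp add: borel_prod)

lemma Pg_meas[measurable]: "(\<lambda>p. kin_P t x v (fst p) (snd p) * g p) \<in> borel_measurable lborel"
  by (rule meas_lborel_pair) measurable

lemma dPg_meas[measurable]: "(\<lambda>p. dP t x v (fst p) (snd p) h * g p) \<in> borel_measurable lborel"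
  by (rule meas_lborel_pair) measurable

lemma Wt_meas_l[measurable]: "(\<lambda>p. Wt t x v (fst p) (snd p)) \<in> borel_measurable lborel"
  by (rule meas_lborel_pair) measurable

lemma Pg_pt1: "\<bar>kin_P t x v (fst p) (snd p) * g p\<bar> \<le> Mg * Wt t x v (fst p) (snd p)"
proof -
  have "\<bar>kin_P t x v (fst p) (snd p) * g p\<bar> = kin_P t x v (fst p) (snd p) * \<bar>g p\<bar>"
    by (simp add: abs_mult kin_P_nonneg)
  also have "\<dots> \<le> Wt t x v (fst p) (snd p) * Mg"
    by (intro mult_mono Wt_ge_P g_bound Wt_nonneg) simp
  finally show ?thesis by (simp add: mult.commute)
qed

lemma Pg_pt2:
  assumes t: "t > 0"
  shows "\<bar>kin_P t x v (fst p) (snd p) * g p\<bar> \<le> Mg * (4 * KKc TYPE('n) / t ^ (2 * CARD('n))) * indicator S p"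
proof -
  have "\<bar>kin_P t x v (fst p) (snd p) * g p\<bar> = kin_P t x v (fst p) (snd p) * \<bar>g p\<bar>"
    by (simp add: abs_mult kin_P_nonneg)
  also have "\<dots> \<le> (4 * KKc TYPE('n) / t ^ (2 * CARD('n))) * (Mg * indicator S p)"
    by (intro mult_mono order_trans[OF Wt_ge_P Wt_pt_bound[OF t]] g_ind) (use Mg_nonneg KKc_pos[where 'n='n] t in auto)
  finally show ?thesis by (simp add: mult_ac)
qed

lemma dP_bound':
  assumes t: "t > 0"
  shows "\<bar>dP t x v y w h\<bar> \<le> 3 * Wt t x v y w / sqrt t * norm h"
    and "0 \<le> 3 * Wt t x v y w / sqrt t * norm h"
  using dP_bound[OF t, of x v y w h] t Wt_nonneg[of t x v y w] by (auto simp: Wt_def)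

lemma dPg_pt1:
  assumes t: "t > 0"
  shows "\<bar>dP t x v (fst p) (snd p) h * g p\<bar> \<le> Mg * (3 / sqrt t * norm h) * Wt t x v (fst p) (snd p)"
proof -
  have "\<bar>dP t x v (fst p) (snd p) h * g p\<bar> = \<bar>dP t x v (fst p) (snd p) h\<bar> * \<bar>g p\<bar>"
    by (simp add: abs_mult)
  also have "\<dots> \<le> (3 * Wt t x v (fst p) (snd p) / sqrt t * norm h) * Mg"
    by (intro mult_mono g_bound dP_bound'[OF t]) simp
  finally show ?thesis by (simp add: mult_ac)
qed

lemma dPg_pt2:
  assumes t: "t > 0"
  shows "\<bar>dP t x v (fst p) (snd p) h * g p\<bar> \<le> Mg * (3 / sqrt t * norm h) * (4 * KKc TYPE('n) / t ^ (2 * CARD('n))) * indicator S p"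
proof -
  have "\<bar>dP t x v (fst p) (snd p) h * g p\<bar> = \<bar>dP t x v (fst p) (snd p) h\<bar> * \<bar>g p\<bar>"
    by (simp add: abs_mult)
  also have "\<dots> \<le> (3 * Wt t x v (fst p) (snd p) / sqrt t * norm h) * (Mg * indicator S p)"
    by (intro mult_mono g_ind dP_bound'[OF t]) simp
  also have "\<dots> \<le> (3 * (4 * KKc TYPE('n) / t ^ (2 * CARD('n))) / sqrt t * norm h) * (Mg * indicator S p)"
    using Wt_pt_bound[OF t] t Mg_nonneg
    by (intro mult_right_mono divide_right_mono mult_left_mono) auto
  finally show ?thesis by (simp add: mult_ac)
qed

lemma nn_Wt:
  fixes x v :: "real^'n"
  assumes t: "t > 0" and that: "c \<ge> 0"
  shows "(\<integral>\<^sup>+p. ennreal (c * Wt t x v (fst p) (snd p)) \<partial>lborel) \<le> ennreal (c * CP TYPE('n))"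
proof -
  have "(\<integral>\<^sup>+p. ennreal (c * Wt t x v (fst p) (snd p)) \<partial>lborel) = ennreal c * (\<integral>\<^sup>+p. ennreal (Wt t x v (fst p) (snd p)) \<partial>lborel)"
    using that by (subst nn_integral_cmult[symmetric]) (auto simp: ennreal_mult Wt_nonneg)
  also have "\<dots> \<le> ennreal c * ennreal (CP TYPE('n))"
    by (rule mult_left_mono[OF Wt_int_bound[OF t]]) simp
  also have "\<dots> = ennreal (c * CP TYPE('n))" using that CP_nonneg[where 'n='n] by (simp add: ennreal_mult)
  finally show ?thesis .
qed

lemma nn_S:
  "(\<integral>\<^sup>+p. ennreal (c * indicator S p) \<partial>lborel) = ennreal (c * mS)" if "c \<ge> 0"
proof -
  have "(\<integral>\<^sup>+p. ennreal (c * indicator S p) \<partial>lborel) = (\<integral>\<^sup>+p. ennreal c * indicator S p \<partial>lborel)"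
    by (intro nn_integral_cong) (auto split: split_indicator)
  also have "\<dots> = ennreal c * emeasure lborel S" by (simp add: nn_integral_cmult_indicator)
  finally show ?thesis using that mS_nonneg by (simp add: emeasure_S ennreal_mult)
qed

lemma Pg_nn1:
  assumes t: "t > 0"
  shows "(\<integral>\<^sup>+p. ennreal \<bar>kin_P t x v (fst p) (snd p) * g p\<bar> \<partial>lborel) \<le> ennreal (Mg * CP TYPE('n))"
proof -
  have "(\<integral>\<^sup>+p. ennreal \<bar>kin_P t x v (fst p) (snd p) * g p\<bar> \<partial>lborel) \<le> (\<integral>\<^sup>+p. ennreal (Mg * Wt t x v (fst p) (snd p)) \<partial>lborel)"
    by (rule nn_integral_mono) (intro ennreal_leI Pg_pt1)
  also have "\<dots> \<le> ennreal (Mg * CP TYPE('n))" by (rule nn_Wt[OF t Mg_nonneg])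
  finally show ?thesis .
qed

lemma Pg_nn2:
  assumes t: "t > 0"
  shows "(\<integral>\<^sup>+p. ennreal \<bar>kin_P t x v (fst p) (snd p) * g p\<bar> \<partial>lborel) \<le> ennreal (Mg * (4 * KKc TYPE('n) / t ^ (2 * CARD('n))) * mS)"
proof -
  have c: "Mg * (4 * KKc TYPE('n) / t ^ (2 * CARD('n))) \<ge> 0" using Mg_nonneg KKc_pos[where 'n='n] t by simp
  show ?thesis
    by (rule order_trans[OF nn_integral_mono eq_refl[OF nn_S[OF c]]]) (intro ennreal_leI Pg_pt2[OF t])
qed

lemma dPg_nn1:
  assumes t: "t > 0"
  shows "(\<integral>\<^sup>+p. ennreal \<bar>dP t x v (fst p) (snd p) h * g p\<bar> \<partial>lborel) \<le> ennreal (Mg * (3 / sqrt t * norm h) * CP TYPE('n))"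
proof -
  have c: "Mg * (3 / sqrt t * norm h) \<ge> 0" using Mg_nonneg t by simp
  have "(\<integral>\<^sup>+p. ennreal \<bar>dP t x v (fst p) (snd p) h * g p\<bar> \<partial>lborel) \<le> (\<integral>\<^sup>+p. ennreal (Mg * (3 / sqrt t * norm h) * Wt t x v (fst p) (snd p)) \<partial>lborel)"
    by (rule nn_integral_mono) (intro ennreal_leI dPg_pt1[OF t])
  also have "\<dots> \<le> ennreal (Mg * (3 / sqrt t * norm h) * CP TYPE('n))" by (rule nn_Wt[OF t c])
  finally show ?thesis .
qed

lemma dPg_nn2:
  assumes t: "t > 0"
  shows "(\<integral>\<^sup>+p. ennreal \<bar>dP t x v (fst p) (snd p) h * g p\<bar> \<partial>lborel) \<le> ennreal (Mg * (3 / sqrt t * norm h) * (4 * KKc TYPE('n) / t ^ (2 * CARD('n))) * mS)"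
proof -
  have c: "Mg * (3 / sqrt t * norm h) * (4 * KKc TYPE('n) / t ^ (2 * CARD('n))) \<ge> 0" using Mg_nonneg KKc_pos[where 'n='n] t by simp
  show ?thesis
    by (rule order_trans[OF nn_integral_mono eq_refl[OF nn_S[OF c]]]) (intro ennreal_leI dPg_pt2[OF t])
qed

lemma Pg_int:
  assumes t: "t > 0"
  shows "integrable lborel (\<lambda>p. kin_P t x v (fst p) (snd p) * g p)"
  by (rule integrableI_bounded) (use Pg_nn1[OF t, of x v] in \<open>auto simp: less_top[symmetric] top_unique\<close>)

lemma dPg_int:
  assumes t: "t > 0"
  shows "integrable lborel (\<lambda>p. dP t x v (fst p) (snd p) h * g p)"
  by (rule integrableI_bounded) (use dPg_nn1[OF t, of x v h] in \<open>auto simp: less_top[symmetric] top_unique\<close>)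

lemma bound_from_nn:
  fixes f :: "_ \<Rightarrow> real"
  assumes "integrable M f" "(\<integral>\<^sup>+p. ennreal \<bar>f p\<bar> \<partial>M) \<le> ennreal B" "B \<ge> 0"
  shows "\<bar>\<integral>p. f p \<partial>M\<bar> \<le> B"
proof -
  have "ennreal (norm (\<integral>p. f p \<partial>M)) \<le> (\<integral>\<^sup>+p. ennreal (norm (f p)) \<partial>M)"
    by (rule integral_norm_bound_ennreal[OF assms(1)])
  also have "\<dots> \<le> ennreal B" using assms(2) by simp
  finally show ?thesis using assms(3) by simp
qed

lemma st1_deriv:
  assumes t: "t > 0"
  shows "((\<lambda>v. \<integral>p. kin_P t x v (fst p) (snd p) * g p \<partial>lborel) has_derivative
     (\<lambda>h. \<integral>p. dP t x v (fst p) (snd p) h * g p \<partial>lborel)) (at v)"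
proof (rule DUI[where \<delta>=1 and H="\<lambda>p. Mg * (3 / sqrt t) * (4 * KKc TYPE('n) / t ^ (2 * CARD('n))) * indicator S p"])
  show "((\<lambda>u. kin_P t x u (fst p) (snd p) * g p) has_derivative (\<lambda>h. dP t x u (fst p) (snd p) h * g p)) (at u)" for u p
    by (rule has_derivative_mult_left[OF P_deriv[OF t]])
  show "integrable lborel (\<lambda>p. kin_P t x u (fst p) (snd p) * g p)" for u by (rule Pg_int[OF t])
  show "(\<lambda>p. dP t x v (fst p) (snd p) h * g p) \<in> borel_measurable lborel" for h by measurable
  show "\<bar>dP t x u (fst p) (snd p) h * g p\<bar> \<le> Mg * (3 / sqrt t) * (4 * KKc TYPE('n) / t ^ (2 * CARD('n))) * indicator S p * norm h" for u p h
    using dPg_pt2[OF t, of x u p h] by (simp add: mult_ac)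
  show "integrable lborel (\<lambda>p. Mg * (3 / sqrt t) * (4 * KKc TYPE('n) / t ^ (2 * CARD('n))) * indicator S p)"
    using S_fin by (intro Bochner_Integration.integrable_mult_right integrable_real_indicator) auto
qed simp

end

lemma integrable_from_has_integral:
  fixes f :: "real \<Rightarrow> real"
  assumes m[measurable]: "f \<in> borel_measurable borel" and nn: "\<And>x. f x \<ge> 0" and I: "(f has_integral I) UNIV"
  shows "integrable lborel f"
proof (rule integrableI_bounded)
  show "f \<in> borel_measurable lborel" by simp
  have "(\<integral>\<^sup>+x. ennreal (norm (f x)) \<partial>lborel) = (\<integral>\<^sup>+x. ennreal (f x) \<partial>lborel)"
    using nn by simp
  also have "\<dots> = ennreal I" by (rule nn_integral_has_integral_lborel[OF m nn I])
  finally show "(\<integral>\<^sup>+x. ennreal (norm (f x)) \<partial>lborel) < \<infinity>" by simp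
qed

definition ha :: "real \<Rightarrow> real" where "ha t = indicator {0..1} t * t powr (-1/2)"
definition hb :: "real \<Rightarrow> real" where "hb t = indicator {1..} t * t powr (-5/2)"
definition hc :: "real \<Rightarrow> real" where "hc t = indicator {1..} t * t powr (-2)"
definition hdd :: "real \<Rightarrow> real" where "hdd t = indicator {0..1} t"

lemma ha_nn: "ha t \<ge> 0" by (simp add: ha_def)
lemma hb_nn: "hb t \<ge> 0" by (simp add: hb_def)
lemma hc_nn: "hc t \<ge> 0" by (simp add: hc_def)
lemma hd_nn: "hdd t \<ge> 0" by (simp add: hdd_def)

lemma ha_int: "integrable lborel ha"
proof (rule integrable_from_has_integral[OF _ ha_nn])
  show "ha \<in> borel_measurable borel" unfolding ha_def by measurable
  have hi: "((\<lambda>x. x powr (-1/2::real)) has_integral (1 powr (-1/2 + 1) / (-1/2 + 1))) {0..1}"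
    by (rule has_integral_powr_from_0) auto
  show "(ha has_integral (1 powr (-1/2 + 1) / (-1/2 + 1))) UNIV"
  proof -
    have e: "ha = (\<lambda>x. if x \<in> {0..1} then x powr (-1/2::real) else 0)" by (auto simp: ha_def fun_eq_iff indicator_def)
    show ?thesis unfolding e has_integral_restrict_UNIV by (rule hi)
  qed
qed

lemma hb_int: "integrable lborel hb"
proof (rule integrable_from_has_integral[OF _ hb_nn])
  show "hb \<in> borel_measurable borel" unfolding hb_def by measurable
  have hi: "((\<lambda>x. x powr (-5/2::real)) has_integral (-(1 powr (-5/2 + 1)) / (-5/2 + 1))) {1..}"
    by (rule has_integral_powr_to_inf) auto
  show "(hb has_integral (-(1 powr (-5/2 + 1)) / (-5/2 + 1))) UNIV"
  proof -
    have e: "hb = (\<lambda>x. if x \<in> {1..} then x powr (-5/2::real) else 0)" by (auto simp: hb_def fun_eq_iff indicator_def)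
    show ?thesis unfolding e has_integral_restrict_UNIV by (rule hi)
  qed
qed

lemma hc_int: "integrable lborel hc"
proof (rule integrable_from_has_integral[OF _ hc_nn])
  show "hc \<in> borel_measurable borel" unfolding hc_def by measurable
  have hi: "((\<lambda>x. x powr (-2::real)) has_integral (-(1 powr (-2 + 1)) / (-2 + 1))) {1..}"
    by (rule has_integral_powr_to_inf) auto
  show "(hc has_integral (-(1 powr (-2 + 1)) / (-2 + 1))) UNIV"
  proof -
    have e: "hc = (\<lambda>x. if x \<in> {1..} then x powr (-2::real) else 0)" by (auto simp: hc_def fun_eq_iff indicator_def)
    show ?thesis unfolding e has_integral_restrict_UNIV by (rule hi)
  qed
qed

lemma hd_int: "integrable lborel hdd"
  unfolding hdd_def by (rule integrable_real_indicator) auto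

lemma hab_meas[measurable]: "ha \<in> borel_measurable borel" "hb \<in> borel_measurable borel"
   "hc \<in> borel_measurable borel" "hdd \<in> borel_measurable borel"
  unfolding ha_def hb_def hc_def hdd_def by measurable

lemma pow_bound_large:
  assumes "(t::real) \<ge> 1" "n \<ge> 1"
  shows "1 / t ^ (2 * n) \<le> t powr (-2)"
proof -
  have "t ^ 2 \<le> t ^ (2 * n)" by (rule power_increasing) (use assms in auto)
  then have "1 / t ^ (2 * n) \<le> 1 / t ^ 2" using assms by (intro divide_left_mono) auto
  also have "1 / t ^ 2 = t powr (-2)" using assms by (simp add: powr_minus_divide)
  finally show ?thesis .
qed

lemma meas_joint:
  fixes f :: "real \<times> ('a::euclidean_space \<times> 'b::euclidean_space) \<Rightarrow> real"
  shows "f \<in> borel_measurable (borel \<Otimes>\<^sub>M (borel \<Otimes>\<^sub>M borel)) \<Longrightarrow> f \<in> borel_measurable (lborel \<Otimes>\<^sub>M lborel)"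
proof -
  have ss: "sets (lborel \<Otimes>\<^sub>M (lborel :: ('a \<times> 'b) measure)) = sets (borel \<Otimes>\<^sub>M (borel \<Otimes>\<^sub>M borel))"
    by (rule sets_pair_measure_cong) (simp_all only: sets_lborel borel_prod)
  then show "f \<in> borel_measurable (borel \<Otimes>\<^sub>M (borel \<Otimes>\<^sub>M borel)) \<Longrightarrow> f \<in> borel_measurable (lborel \<Otimes>\<^sub>M lborel)"
    unfolding measurable_cong_sets[OF ss refl] by simp
qed

lemma kin_P_meas_t[measurable]: "(\<lambda>t. kin_P t x v y w) \<in> borel_measurable borel"
  unfolding kin_P_def by measurable

lemma inv_sqrt_powr: "t > 0 \<Longrightarrow> 1 / sqrt t = t powr (-1/2)"
  by (simp add: powr_minus_divide powr_half_sqrt)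

lemma pow_bound_large2:
  assumes "(t::real) \<ge> 1" "n \<ge> 1"
  shows "1 / sqrt t * (1 / t ^ (2 * n)) \<le> t powr (-5/2)"
proof -
  have "1 / sqrt t * (1 / t ^ (2 * n)) \<le> t powr (-1/2) * t powr (-2)"
    using assms by (intro mult_mono pow_bound_large) (auto simp: inv_sqrt_powr)
  also have "\<dots> = t powr (-5/2)" by (simp add: powr_add[symmetric])
  finally show ?thesis .
qed

context gset
begin

definition W1 where "W1 t x v = (\<integral>p. kin_P t x v (fst p) (snd p) * g p \<partial>lborel)"
definition D1 where "D1 t x v h = (\<integral>p. dP t x v (fst p) (snd p) h * g p \<partial>lborel)"
definition H0 where "H0 t = Mg * (CP TYPE('n) * hdd t + 4 * KKc TYPE('n) * mS * hc t)"
definition H1 where "H1 t = Mg * 3 * (CP TYPE('n) * ha t + 4 * KKc TYPE('n) * mS * hb t)"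

lemma H0_nn: "H0 t \<ge> 0"
  unfolding H0_def using Mg_nonneg CP_nonneg[where 'n='n] KKc_pos[where 'n='n] mS_nonneg hd_nn hc_nn
  by (intro mult_nonneg_nonneg add_nonneg_nonneg) auto

lemma H1_nn: "H1 t \<ge> 0"
  unfolding H1_def using Mg_nonneg CP_nonneg[where 'n='n] KKc_pos[where 'n='n] mS_nonneg ha_nn hb_nn
  by (intro mult_nonneg_nonneg add_nonneg_nonneg) auto

lemma H0_int: "integrable lborel H0"
  unfolding H0_def using hd_int hc_int by simp

lemma H1_int: "integrable lborel H1"
  unfolding H1_def using ha_int hb_int by simp

lemma H0_ge:
  assumes t: "t > 0"
  shows "t \<le> 1 \<Longrightarrow> Mg * CP TYPE('n) \<le> H0 t"
    and "t > 1 \<Longrightarrow> Mg * (4 * KKc TYPE('n) / t ^ (2 * CARD('n))) * mS \<le> H0 t"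
proof -
  have k: "0 \<le> 4 * KKc TYPE('n) * mS * hc t" "0 \<le> CP TYPE('n) * hdd t"
    using KKc_pos[where 'n='n] mS_nonneg hc_nn hd_nn CP_nonneg[where 'n='n] by auto
  show "t \<le> 1 \<Longrightarrow> Mg * CP TYPE('n) \<le> H0 t"
    unfolding H0_def using t k Mg_nonneg by (intro mult_left_mono) (auto simp: hdd_def)
  assume t1: "t > 1"
  have "1 / t ^ (2 * CARD('n)) \<le> hc t" unfolding hc_def using t1 pow_bound_large[of t "CARD('n)"] by simp
  then have "4 * KKc TYPE('n) * mS * (1 / t ^ (2 * CARD('n))) \<le> 4 * KKc TYPE('n) * mS * hc t"
    using KKc_pos[where 'n='n] mS_nonneg by (intro mult_left_mono) auto
  also have "\<dots> \<le> CP TYPE('n) * hdd t + 4 * KKc TYPE('n) * mS * hc t" using k by simp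
  finally have "Mg * (4 * KKc TYPE('n) * mS * (1 / t ^ (2 * CARD('n)))) \<le> H0 t"
    unfolding H0_def using Mg_nonneg by (intro mult_left_mono) auto
  then show "Mg * (4 * KKc TYPE('n) / t ^ (2 * CARD('n))) * mS \<le> H0 t" by (simp add: mult_ac)
qed

lemma H1_ge:
  assumes t: "t > 0"
  shows "t \<le> 1 \<Longrightarrow> Mg * (3 / sqrt t) * CP TYPE('n) \<le> H1 t"
    and "t > 1 \<Longrightarrow> Mg * (3 / sqrt t) * (4 * KKc TYPE('n) / t ^ (2 * CARD('n))) * mS \<le> H1 t"
proof -
  have k: "0 \<le> 4 * KKc TYPE('n) * mS * hb t" "0 \<le> CP TYPE('n) * ha t"
    using KKc_pos[where 'n='n] mS_nonneg hb_nn ha_nn CP_nonneg[where 'n='n] by auto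
  show "t \<le> 1 \<Longrightarrow> Mg * (3 / sqrt t) * CP TYPE('n) \<le> H1 t"
  proof -
    assume t1: "t \<le> 1"
    have "CP TYPE('n) * (1 / sqrt t) \<le> CP TYPE('n) * ha t + 4 * KKc TYPE('n) * mS * hb t"
      using t t1 k by (simp add: ha_def inv_sqrt_powr)
    then have "Mg * 3 * (CP TYPE('n) * (1 / sqrt t)) \<le> H1 t"
      unfolding H1_def using Mg_nonneg by (intro mult_left_mono) auto
    then show ?thesis by (simp add: mult_ac)
  qed
  assume t1: "t > 1"
  have "1 / sqrt t * (1 / t ^ (2 * CARD('n))) \<le> hb t" unfolding hb_def using t1 pow_bound_large2[of t "CARD('n)"] by simp
  then have "4 * KKc TYPE('n) * mS * (1 / sqrt t * (1 / t ^ (2 * CARD('n)))) \<le> 4 * KKc TYPE('n) * mS * hb t"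
    using KKc_pos[where 'n='n] mS_nonneg by (intro mult_left_mono) auto
  also have "\<dots> \<le> CP TYPE('n) * ha t + 4 * KKc TYPE('n) * mS * hb t" using k by simp
  finally have "Mg * 3 * (4 * KKc TYPE('n) * mS * (1 / sqrt t * (1 / t ^ (2 * CARD('n))))) \<le> H1 t"
    unfolding H1_def using Mg_nonneg by (intro mult_left_mono) auto
  then show "Mg * (3 / sqrt t) * (4 * KKc TYPE('n) / t ^ (2 * CARD('n))) * mS \<le> H1 t" by (simp add: mult_ac)
qed

lemma W1_H0: "\<bar>indicator {0<..} t * W1 t x v\<bar> \<le> H0 t"
proof (cases "t > 0")
  case False then show ?thesis using H0_nn by simp
next
  case t: True
  have c1: "Mg * CP TYPE('n) \<ge> 0" using Mg_nonneg CP_nonneg[where 'n='n] by simp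
  have c2: "Mg * (4 * KKc TYPE('n) / t ^ (2 * CARD('n))) * mS \<ge> 0" using Mg_nonneg KKc_pos[where 'n='n] mS_nonneg t by simp
  have "\<bar>W1 t x v\<bar> \<le> H0 t"
  proof (cases "t \<le> 1")
    case True
    have "\<bar>W1 t x v\<bar> \<le> Mg * CP TYPE('n)" unfolding W1_def by (rule bound_from_nn[OF Pg_int[OF t] Pg_nn1[OF t] c1])
    then show ?thesis using H0_ge(1)[OF t True] by linarith
  next
    case False
    have "\<bar>W1 t x v\<bar> \<le> Mg * (4 * KKc TYPE('n) / t ^ (2 * CARD('n))) * mS" unfolding W1_def by (rule bound_from_nn[OF Pg_int[OF t] Pg_nn2[OF t] c2])
    then show ?thesis using H0_ge(2)[OF t] False by linarith
  qed
  then show ?thesis using t by simp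
qed

lemma Pg_nn_H0: "(\<integral>\<^sup>+p. ennreal \<bar>indicator {0<..} t * kin_P t x v (fst p) (snd p) * g p\<bar> \<partial>lborel) \<le> ennreal (H0 t)"
proof (cases "t > 0")
  case False then show ?thesis by simp
next
  case t: True
  have "(\<integral>\<^sup>+p. ennreal \<bar>kin_P t x v (fst p) (snd p) * g p\<bar> \<partial>lborel) \<le> ennreal (H0 t)"
  proof (cases "t \<le> 1")
    case True
    show ?thesis using Pg_nn1[OF t, of x v] H0_ge(1)[OF t True] order_trans ennreal_leI by blast
  next
    case False
    show ?thesis using Pg_nn2[OF t, of x v] H0_ge(2)[OF t] False order_trans ennreal_leI by (meson not_le)
  qed
  then show ?thesis using t by (simp add: mult.assoc)
qed

lemma D1_H1: "\<bar>indicator {0<..} t * D1 t x v h\<bar> \<le> H1 t * norm h"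
proof (cases "t > 0")
  case False then show ?thesis using H1_nn by simp
next
  case t: True
  have c1: "Mg * (3 / sqrt t * norm h) * CP TYPE('n) \<ge> 0" using Mg_nonneg CP_nonneg[where 'n='n] t by simp
  have c2: "Mg * (3 / sqrt t * norm h) * (4 * KKc TYPE('n) / t ^ (2 * CARD('n))) * mS \<ge> 0"
    using Mg_nonneg KKc_pos[where 'n='n] mS_nonneg t by simp
  have "\<bar>D1 t x v h\<bar> \<le> H1 t * norm h"
  proof (cases "t \<le> 1")
    case True
    have "\<bar>D1 t x v h\<bar> \<le> Mg * (3 / sqrt t * norm h) * CP TYPE('n)" unfolding D1_def by (rule bound_from_nn[OF dPg_int[OF t] dPg_nn1[OF t] c1])
    also have "\<dots> = (Mg * (3 / sqrt t) * CP TYPE('n)) * norm h" by (simp add: mult_ac)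
    also have "\<dots> \<le> H1 t * norm h" by (intro mult_right_mono H1_ge(1)[OF t True]) simp
    finally show ?thesis .
  next
    case False
    have "\<bar>D1 t x v h\<bar> \<le> Mg * (3 / sqrt t * norm h) * (4 * KKc TYPE('n) / t ^ (2 * CARD('n))) * mS" unfolding D1_def by (rule bound_from_nn[OF dPg_int[OF t] dPg_nn2[OF t] c2])
    also have "\<dots> = (Mg * (3 / sqrt t) * (4 * KKc TYPE('n) / t ^ (2 * CARD('n))) * mS) * norm h" by (simp add: mult_ac)
    also have "\<dots> \<le> H1 t * norm h" using False by (intro mult_right_mono H1_ge(2)[OF t]) auto
    finally show ?thesis .
  qed
  then show ?thesis using t by simp
qed

lemma W1_meas[measurable]: "(\<lambda>t. W1 t x v) \<in> borel_measurable lborel"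
proof -
  have "(\<lambda>q. kin_P (fst q) x v (fst (snd q)) (snd (snd q)) * g (snd q)) \<in> borel_measurable (borel \<Otimes>\<^sub>M (borel \<Otimes>\<^sub>M borel))"
    by measurable
  then have "(\<lambda>q. kin_P (fst q) x v (fst (snd q)) (snd (snd q)) * g (snd q)) \<in> borel_measurable (lborel \<Otimes>\<^sub>M lborel)"
    by (rule meas_joint)
  then show ?thesis unfolding W1_def
    by (intro lborel.borel_measurable_lebesgue_integral) (simp add: case_prod_beta')
qed

lemma D1_meas[measurable]: "(\<lambda>t. D1 t x v h) \<in> borel_measurable lborel"
proof -
  have "(\<lambda>q. dP (fst q) x v (fst (snd q)) (snd (snd q)) h * g (snd q)) \<in> borel_measurable (borel \<Otimes>\<^sub>M (borel \<Otimes>\<^sub>M borel))"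
    by measurable
  then have "(\<lambda>q. dP (fst q) x v (fst (snd q)) (snd (snd q)) h * g (snd q)) \<in> borel_measurable (lborel \<Otimes>\<^sub>M lborel)"
    by (rule meas_joint)
  then show ?thesis unfolding D1_def
    by (intro lborel.borel_measurable_lebesgue_integral) (simp add: case_prod_beta')
qed

lemma W1_int: "integrable lborel (\<lambda>t. indicator {0<..} t * W1 t x v)"
proof (rule Bochner_Integration.integrable_bound[OF H0_int])
  show "(\<lambda>t. indicator {0<..} t * W1 t x v) \<in> borel_measurable lborel" by measurable
  show "AE t in lborel. norm (indicator {0<..} t * W1 t x v) \<le> norm (H0 t)"
    using W1_H0 H0_nn by (intro AE_I2) (auto intro: order_trans)
qed

lemma st2_deriv:
  "((\<lambda>v. \<integral>t. indicator {0<..} t * W1 t x v \<partial>lborel) has_derivative (\<lambda>h. \<integral>t. indicator {0<..} t * D1 t x v h \<partial>lborel)) (at v)"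
proof (rule DUI[where \<delta>=1 and H=H1])
  show "((\<lambda>u. indicator {0<..} t * W1 t x u) has_derivative (\<lambda>h. indicator {0<..} t * D1 t x u h)) (at u)" for u t
  proof (cases "t > 0")
    case True
    have "((\<lambda>u. W1 t x u) has_derivative (\<lambda>h. D1 t x u h)) (at u)"
      unfolding W1_def D1_def by (rule st1_deriv[OF True])
    then show ?thesis by (rule has_derivative_mult_right)
  next
    case False then show ?thesis by simp
  qed
  show "integrable lborel (\<lambda>t. indicator {0<..} t * W1 t x u)" for u by (rule W1_int)
  show "(\<lambda>t. indicator {0<..} t * D1 t x v h) \<in> borel_measurable lborel" for h by measurable
  show "\<bar>indicator {0<..} t * D1 t x u h\<bar> \<le> H1 t * norm h" for u t h by (rule D1_H1)
  show "integrable lborel H1" by (rule H1_int)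
qed simp

lemma st2_bound: "\<bar>\<integral>t. indicator {0<..} t * W1 t x v \<partial>lborel\<bar> \<le> (\<integral>t. H0 t \<partial>lborel)"
proof -
  have "\<bar>\<integral>t. indicator {0<..} t * W1 t x v \<partial>lborel\<bar> \<le> (\<integral>t. \<bar>indicator {0<..} t * W1 t x v\<bar> \<partial>lborel)"
    by (rule integral_abs_bound)
  also have "\<dots> \<le> (\<integral>t. H0 t \<partial>lborel)"
    using W1_int H0_int W1_H0 by (intro Bochner_Integration.integral_mono) auto
  finally show ?thesis .
qed

lemma st2_dbound: "\<bar>\<integral>t. indicator {0<..} t * D1 t x v h \<partial>lborel\<bar> \<le> (\<integral>t. H1 t \<partial>lborel) * norm h"
proof -
  have int: "integrable lborel (\<lambda>t. indicator {0<..} t * D1 t x v h)"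
  proof (rule Bochner_Integration.integrable_bound[where f="\<lambda>t. H1 t * norm h"])
    show "integrable lborel (\<lambda>t. H1 t * norm h)" using H1_int by simp
    show "(\<lambda>t. indicator {0<..} t * D1 t x v h) \<in> borel_measurable lborel" by measurable
    show "AE t in lborel. norm (indicator {0<..} t * D1 t x v h) \<le> norm (H1 t * norm h)"
      using D1_H1 H1_nn by (intro AE_I2) (auto intro: order_trans simp: abs_mult)
  qed
  have "\<bar>\<integral>t. indicator {0<..} t * D1 t x v h \<partial>lborel\<bar> \<le> (\<integral>t. \<bar>indicator {0<..} t * D1 t x v h\<bar> \<partial>lborel)"
    by (rule integral_abs_bound)
  also have "\<dots> \<le> (\<integral>t. H1 t * norm h \<partial>lborel)"
    using int H1_int D1_H1 by (intro Bochner_Integration.integral_mono) auto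
  finally show ?thesis by simp
qed

end

context gset
begin

definition FF where "FF x v = (\<lambda>(t, p). indicator {0<..} t * kin_P t x v (fst p) (snd p) * g p)"

lemma FF_meas: "FF x v \<in> borel_measurable (lborel \<Otimes>\<^sub>M lborel)"
proof -
  have "(\<lambda>q. indicator {0<..} (fst q) * kin_P (fst q) x v (fst (snd q)) (snd (snd q)) * g (snd q)) \<in> borel_measurable (borel \<Otimes>\<^sub>M (borel \<Otimes>\<^sub>M borel))"
    by measurable
  then have "(\<lambda>q. indicator {0<..} (fst q) * kin_P (fst q) x v (fst (snd q)) (snd (snd q)) * g (snd q)) \<in> borel_measurable (lborel \<Otimes>\<^sub>M lborel)"
    by (rule meas_joint)
  then show ?thesis unfolding FF_def by (simp add: case_prod_beta')
qed

lemma FF_int: "integrable (lborel \<Otimes>\<^sub>M lborel) (FF x v)"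
proof (rule integrableI_bounded)
  show "FF x v \<in> borel_measurable (lborel \<Otimes>\<^sub>M lborel)" by (rule FF_meas)
  have m: "(\<lambda>q. ennreal (norm (FF x v q))) \<in> borel_measurable (lborel \<Otimes>\<^sub>M lborel)"
    using FF_meas by measurable
  have "(\<integral>\<^sup>+q. ennreal (norm (FF x v q)) \<partial>(lborel \<Otimes>\<^sub>M lborel)) = (\<integral>\<^sup>+t. \<integral>\<^sup>+p. ennreal (norm (FF x v (t, p))) \<partial>lborel \<partial>lborel)"
    by (rule lborel.nn_integral_fst[symmetric, OF m])
  also have "\<dots> \<le> (\<integral>\<^sup>+t. ennreal (H0 t) \<partial>lborel)"
    by (intro nn_integral_mono) (use Pg_nn_H0 in \<open>simp add: FF_def\<close>)
  also have "\<dots> < \<infinity>"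
    using H0_int H0_nn unfolding integrable_iff_bounded by simp
  finally show "(\<integral>\<^sup>+q. ennreal (norm (FF x v q)) \<partial>(lborel \<Otimes>\<^sub>M lborel)) < \<infinity>" .
qed

lemma FF_t: "(\<integral>t. FF x v (t, p) \<partial>lborel) = kin_G x v (fst p) (snd p) * g p"
proof -
  have "(\<integral>t. FF x v (t, p) \<partial>lborel) = (\<integral>t. indicator {0<..} t * kin_P t x v (fst p) (snd p) \<partial>lborel) * g p"
    by (simp add: FF_def)
  also have "(\<integral>t. indicator {0<..} t * kin_P t x v (fst p) (snd p) \<partial>lborel)
     = enn2real (\<integral>\<^sup>+t. ennreal (indicator {0<..} t * kin_P t x v (fst p) (snd p)) \<partial>lborel)"
    by (rule integral_eq_nn_integral) (auto simp: kin_P_nonneg)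
  also have "(\<integral>\<^sup>+t. ennreal (indicator {0<..} t * kin_P t x v (fst p) (snd p)) \<partial>lborel)
     = (\<integral>\<^sup>+t. ennreal (kin_P t x v (fst p) (snd p)) * indicator {0<..} t \<partial>lborel)"
    by (intro nn_integral_cong) (auto split: split_indicator)
  finally show ?thesis unfolding kin_G_def .
qed

lemma FF_p: "(\<integral>p. FF x v (t, p) \<partial>lborel) = indicator {0<..} t * W1 t x v"
  by (simp add: FF_def W1_def mult.assoc)

lemma st3_int: "integrable lborel (\<lambda>p. kin_G x v (fst p) (snd p) * g p)"
proof -
  have "integrable lborel (\<lambda>p. \<integral>t. FF x v (t, p) \<partial>lborel)"
    using lborel_pair.integrable_snd[where f="\<lambda>t p. FF x v (t, p)"] FF_int[of x v] by simp
  then show ?thesis unfolding FF_t .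
qed

lemma st3_eq: "(\<integral>p. kin_G x v (fst p) (snd p) * g p \<partial>lborel) = (\<integral>t. indicator {0<..} t * W1 t x v \<partial>lborel)"
proof -
  have "(\<integral>p. \<integral>t. FF x v (t, p) \<partial>lborel \<partial>lborel) = (\<integral>t. \<integral>p. FF x v (t, p) \<partial>lborel \<partial>lborel)"
    using lborel_pair.Fubini_integral[where f="\<lambda>t p. FF x v (t, p)"] FF_int[of x v] by simp
  then show ?thesis unfolding FF_t FF_p .
qed

end

lemma gset_integral_H0: "gset g S Mg \<Longrightarrow> (\<integral>t. gset.H0 S Mg t \<partial>lborel) =
   Mg * (CP TYPE('n::finite) * (\<integral>t. hdd t \<partial>lborel) + 4 * KKc TYPE('n) * measure lborel S * (\<integral>t. hc t \<partial>lborel))"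
  for g :: "(real^'n) \<times> (real^'n) \<Rightarrow> real"
  unfolding gset.H0_def gset.mS_def using hd_int hc_int by simp

lemma gset_integral_H1: "gset g S Mg \<Longrightarrow> (\<integral>t. gset.H1 S Mg t \<partial>lborel) =
   Mg * (3 * (CP TYPE('n::finite) * (\<integral>t. ha t \<partial>lborel) + 4 * KKc TYPE('n) * measure lborel S * (\<integral>t. hb t \<partial>lborel)))"
  for g :: "(real^'n) \<times> (real^'n) \<Rightarrow> real"
  unfolding gset.H1_def gset.mS_def using ha_int hb_int by simp

theorem lemma5p2:
  fixes theta chi :: "real^'n::finite \<Rightarrow> real" and K :: real
    and KK :: "((real^'n) \<times> (real^'n)) set"
  assumes theta_smooth: "smooth_fun theta"
    and theta_nonneg: "\<And>x. theta x \<ge> 0"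
    and theta_int: "integrable lborel theta" "(\<integral> x. theta x \<partial>lborel) = 1"
    and theta_zero: "theta 0 = 0"
    and theta_even: "\<And>x. theta x = theta (- x)"
    and theta_supp: "\<And>x. norm x > 1 \<Longrightarrow> theta x = 0"
    and K_pos: "K > 0"
    and chi_smooth: "smooth_fun chi"
    and chi_range: "\<And>\<xi>. 0 \<le> chi \<xi> \<and> chi \<xi> \<le> 1"
    and chi_one: "\<And>\<xi>. norm \<xi> \<le> 2 * K \<Longrightarrow> chi \<xi> = 1"
    and chi_zero: "\<And>\<xi>. norm \<xi> \<ge> 4 * K \<Longrightarrow> chi \<xi> = 0"
    and KK_compact: "compact KK"
  shows "\<exists>C::real. \<forall>\<epsilon> x v. 0 < \<epsilon> \<and> \<epsilon> \<le> 1 \<and> (x, v) \<in> KK \<longrightarrow>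
           integrable lborel (U_integrand theta chi \<epsilon> x v) \<and>
           \<bar>U_eps theta chi \<epsilon> x v\<bar> \<le> C * \<epsilon> powr (- real CARD('n)) \<and>
           (\<exists>D. ((\<lambda>w. U_eps theta chi \<epsilon> x w) has_derivative D) (at v) \<and>
                (\<forall>h. \<bar>D h\<bar> \<le> C * \<epsilon> powr (- real CARD('n)) * norm h))"
proof -
  have th_cont: "continuous_on UNIV theta"
    using theta_smooth unfolding smooth_fun_def by (metis iter_partial.simps(1))
  have chi_cont: "continuous_on UNIV chi"
    using chi_smooth unfolding smooth_fun_def by (metis iter_partial.simps(1))
  note th_meas[measurable] = borel_measurable_continuous_onI[OF th_cont]
  note chi_meas[measurable] = borel_measurable_continuous_onI[OF chi_cont]
  obtain \<Theta> where \<Theta>: "\<And>y. \<bar>theta y\<bar> \<le> \<Theta>" and \<Theta>0: "\<Theta> \<ge> 0"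
  proof -
    have "compact (theta ` cball 0 1)"
      by (rule compact_continuous_image) (use th_cont continuous_on_subset in auto)
    then obtain B where B: "\<And>z. z \<in> theta ` cball 0 1 \<Longrightarrow> norm z \<le> B"
      using compact_imp_bounded bounded_iff by metis
    have "\<bar>theta y\<bar> \<le> max B 0" for y
    proof (cases "norm y > 1")
      case True then show ?thesis using theta_supp by simp
    next
      case False then have "y \<in> cball 0 1" by simp
      then show ?thesis using B[of "theta y"] by force
    qed
    then show ?thesis using that[of "max B 0"] by simp
  qed
  define S :: "((real^'n) \<times> (real^'n)) set" where "S = cball 0 1 \<times> cball 0 (4 * K)"
  have S_sets: "S \<in> sets borel" unfolding S_def by (simp add: closed_Times)
  have S_fin: "emeasure lborel S < \<infinity>" unfolding S_def
    by (rule emeasure_bounded_finite) (simp add: bounded_Times)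
  define A0 where "A0 = CP TYPE('n) * (\<integral>t. hdd t \<partial>lborel) + 4 * KKc TYPE('n) * measure lborel S * (\<integral>t. hc t \<partial>lborel)"
  define A1 where "A1 = 3 * (CP TYPE('n) * (\<integral>t. ha t \<partial>lborel) + 4 * KKc TYPE('n) * measure lborel S * (\<integral>t. hb t \<partial>lborel))"
  have i0: "0 \<le> (\<integral>t. hdd t \<partial>lborel)" "0 \<le> (\<integral>t. hc t \<partial>lborel)"
     "0 \<le> (\<integral>t. ha t \<partial>lborel)" "0 \<le> (\<integral>t. hb t \<partial>lborel)"
    by (rule Bochner_Integration.integral_nonneg, simp add: hd_nn hc_nn ha_nn hb_nn)+
  have A0: "A0 \<ge> 0" unfolding A0_def using CP_nonneg[where 'n='n] KKc_pos[where 'n='n] i0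
    by (intro add_nonneg_nonneg mult_nonneg_nonneg) auto
  have A1: "A1 \<ge> 0" unfolding A1_def using CP_nonneg[where 'n='n] KKc_pos[where 'n='n] i0
    by (intro add_nonneg_nonneg mult_nonneg_nonneg) auto
  show ?thesis
  proof (intro exI[of _ "\<Theta> * (A0 + A1)"] allI impI, elim conjE)
    fix \<epsilon> :: real and x v :: "real^'n"
    assume e0: "0 < \<epsilon>" and e1: "\<epsilon> \<le> 1"
    define g where "g p = mollif theta \<epsilon> (fst p) * chi (snd p)" for p :: "(real^'n) \<times> (real^'n)"
    define Mg where "Mg = \<epsilon> powr (- real CARD('n)) * \<Theta>"
    have gs: "gset g S Mg"
    proof
      have "g \<in> borel_measurable (borel \<Otimes>\<^sub>M borel)" unfolding g_def mollif_def by measurable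
      then show "g \<in> borel_measurable borel" by (simp add: borel_prod)
      show "\<bar>g p\<bar> \<le> Mg" for p
      proof -
        have "\<bar>g p\<bar> = \<epsilon> powr (- real CARD('n)) * \<bar>theta ((1 / \<epsilon>) *\<^sub>R fst p)\<bar> * \<bar>chi (snd p)\<bar>"
          unfolding g_def mollif_def by (simp add: abs_mult)
        also have "\<dots> \<le> \<epsilon> powr (- real CARD('n)) * \<Theta> * 1"
          using \<Theta> \<Theta>0 chi_range by (intro mult_mono mult_left_mono) auto
        finally show ?thesis by (simp add: Mg_def)
      qed
      show "g p = 0" if "p \<notin> S" for p
      proof (cases "norm (fst p) > 1")
        case True
        have "norm ((1 / \<epsilon>) *\<^sub>R fst p) = norm (fst p) / \<epsilon>" using e0 by simp
        also have "\<dots> \<ge> norm (fst p)" using e0 e1 by (simp add: le_divide_eq mult_left_le)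
        finally have "norm ((1 / \<epsilon>) *\<^sub>R fst p) > 1" using True by linarith
        then show ?thesis unfolding g_def mollif_def using theta_supp by simp
      next
        case False
        then have "norm (snd p) > 4 * K" using that unfolding S_def by (cases p) (auto simp: not_le)
        then show ?thesis unfolding g_def using chi_zero by simp
      qed
    qed (fact S_sets, fact S_fin)
    interpret gset g S Mg by (rule gs)
    have UI: "U_integrand theta chi \<epsilon> x w = (\<lambda>p. kin_G x w (fst p) (snd p) * g p)" for w
      unfolding U_integrand_def g_def by (auto simp: fun_eq_iff mult.assoc)
    have UE: "U_eps theta chi \<epsilon> x w = (\<integral>t. indicator {0<..} t * W1 t x w \<partial>lborel)" for w
      unfolding U_eps_def UI by (rule st3_eq)
    have Mg0: "Mg \<ge> 0" using \<Theta>0 by (simp add: Mg_def)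
    have ep: "\<epsilon> powr (- real CARD('n)) \<ge> 0" by simp
    show "integrable lborel (U_integrand theta chi \<epsilon> x v) \<and>
           \<bar>U_eps theta chi \<epsilon> x v\<bar> \<le> \<Theta> * (A0 + A1) * \<epsilon> powr (- real CARD('n)) \<and>
           (\<exists>D. ((\<lambda>w. U_eps theta chi \<epsilon> x w) has_derivative D) (at v) \<and>
                (\<forall>h. \<bar>D h\<bar> \<le> \<Theta> * (A0 + A1) * \<epsilon> powr (- real CARD('n)) * norm h))"
    proof (intro conjI exI[of _ "\<lambda>h. \<integral>t. indicator {0<..} t * D1 t x v h \<partial>lborel"] allI)
      show "integrable lborel (U_integrand theta chi \<epsilon> x v)" unfolding UI by (rule st3_int)
      have "\<bar>U_eps theta chi \<epsilon> x v\<bar> \<le> Mg * A0"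
        unfolding UE using st2_bound[of x v] gset_integral_H0[OF gs] by (simp add: A0_def)
      also have "\<dots> \<le> Mg * (A0 + A1)" using Mg0 A1 by (intro mult_left_mono) auto
      finally show "\<bar>U_eps theta chi \<epsilon> x v\<bar> \<le> \<Theta> * (A0 + A1) * \<epsilon> powr (- real CARD('n))"
        by (simp add: Mg_def mult_ac)
      show "((\<lambda>w. U_eps theta chi \<epsilon> x w) has_derivative (\<lambda>h. \<integral>t. indicator {0<..} t * D1 t x v h \<partial>lborel)) (at v)"
        unfolding UE by (rule st2_deriv)
      fix h
      have "\<bar>\<integral>t. indicator {0<..} t * D1 t x v h \<partial>lborel\<bar> \<le> Mg * A1 * norm h"
        using st2_dbound[of x v h] gset_integral_H1[OF gs] by (simp add: A1_def)
      also have "\<dots> \<le> Mg * (A0 + A1) * norm h" using Mg0 A0 by (intro mult_right_mono mult_left_mono) auto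
      finally show "\<bar>\<integral>t. indicator {0<..} t * D1 t x v h \<partial>lborel\<bar> \<le> \<Theta> * (A0 + A1) * \<epsilon> powr (- real CARD('n)) * norm h"
        by (simp add: Mg_def mult_ac)
    qed
  qed
qed

end
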